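(* Let $G^S$ be a tree on the state node set $V^S$, and let the network $\mathcal G=G^S\cup G^I$ have $m\ge 2$ external input nodes $u_1,\dots,u_m$, attached to pairwise distinct state nodes $v_1,\dots,v_m$. Then $\mathcal G$ is strongly structurally controllable if and only if $V^S$ can be partitioned into $m$ disjoint sets $V_1^S,\dots,V_m^S$ such that, for each $r$, the subgraph of $G^S$ induced by $V_r^S$ is a path, $v_r\in V_r^S$, and $v_r$ is an endpoint of that path (i.e. each component $\mathcal G_r$, consisting of the path on $V_r^S$ with the single input $u_r$, is an SSC path network with its input at a terminal node); in such a decomposition any two distinct parts are joined by at most one edge of $G^S$.
   Context: Network model: a network $\mathcal G=G^S\cup G^I$ consists of an undirected simple state graph $G^S$ on state nodes $\{1,\dots,n\}$ and a set of $m$ external input nodes $u_1,\dots,u_m$, where each input node $u_r$ has exactly one directed edge, to a state node $v_r$, and the $v_r$ are pairwise distinct; the input matrix is $B=[e_{v_1},\dots,e_{v_m}]\in\mathbb R^{n\times m}$. The dynamics are $\dot x=Mx+Bu$, where $M$ ranges over the family $Q(G^S)$ of symmetric matrices with $M_{ij}=a_{ij}>0$ if $\{i,j\}$ is an edge of $G^S$, $M_{ij}=0$ if $i\ne j$ are non-adjacent, and $M_{ii}=-\sum_{j\in\mathcal N_i}a_{ij}+a_{ii}$ with an arbitrary self-loop weight $a_{ii}<0$ ($\mathcal N_i$ the neighbours of $i$ in $G^S$). The network is strongly structurally controllable (SSC) if for every $M\in Q(G^S)$ the controllability matrix $[B,MB,\dots,M^{n-1}B]$ has rank $n$. A path consisting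 of a single vertex has that vertex as its endpoint. *)

theory Defs
  imports "HOL-Analysis.Analysis"
begin

text \<open>State graph: vertex set UNIV of a finite type 'n (the state nodes 1..n),
  edges given by a symmetric irreflexive relation E.\<close>

definition simple_graph :: "('n \<Rightarrow> 'n \<Rightarrow> bool) \<Rightarrow> bool" where
  "simple_graph E \<longleftrightarrow> (\<forall>x y. E x y \<longrightarrow> E y x) \<and> (\<forall>x. \<not> E x x)"

definition is_gpath :: "('n \<Rightarrow> 'n \<Rightarrow> bool) \<Rightarrow> 'n list \<Rightarrow> bool" where
  "is_gpath E xs \<longleftrightarrow> xs \<noteq> [] \<and> distinct xs \<and> (\<forall>i. Suc i < length xs \<longrightarrow> E (xs ! i) (xs ! Suc i))"

definition graph_connected :: "('n \<Rightarrow> 'n \<Rightarrow> bool) \<Rightarrow> bool" where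
  "graph_connected E \<longleftrightarrow> (\<forall>u v. \<exists>xs. is_gpath E xs \<and> hd xs = u \<and> last xs = v)"

definition graph_acyclic :: "('n \<Rightarrow> 'n \<Rightarrow> bool) \<Rightarrow> bool" where
  "graph_acyclic E \<longleftrightarrow> \<not> (\<exists>xs. is_gpath E xs \<and> length xs \<ge> 3 \<and> E (last xs) (hd xs))"

definition is_tree :: "('n \<Rightarrow> 'n \<Rightarrow> bool) \<Rightarrow> bool" where
  "is_tree E \<longleftrightarrow> simple_graph E \<and> graph_connected E \<and> graph_acyclic E"

definition induced_path_from :: "('n \<Rightarrow> 'n \<Rightarrow> bool) \<Rightarrow> 'n set \<Rightarrow> 'n \<Rightarrow> bool" where
  "induced_path_from E S v \<longleftrightarrow>
     (\<exists>xs. is_gpath E xs \<and> set xs = S \<and> hd xs = v \<and>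
        (\<forall>i j. i < length xs \<and> j < length xs \<and> E (xs ! i) (xs ! j) \<longrightarrow> i = Suc j \<or> j = Suc i))"

fun matpow :: "real^'n^'n \<Rightarrow> nat \<Rightarrow> real^'n^'n" where
  "matpow M 0 = mat 1"
| "matpow M (Suc k) = M ** matpow M k"

definition qualclass :: "('n::finite \<Rightarrow> 'n \<Rightarrow> bool) \<Rightarrow> (real^'n^'n) set" where
  "qualclass E = {M. transpose M = M \<and>
      (\<forall>i j. i \<noteq> j \<longrightarrow> (E i j \<longrightarrow> M $ i $ j > 0) \<and> (\<not> E i j \<longrightarrow> M $ i $ j = 0)) \<and>
      (\<forall>i. \<exists>a::real. a < 0 \<and> M $ i $ i = - (\<Sum>j\<in>{j. E i j}. M $ i $ j) + a)}"

text \<open>Columns of the controllability matrix [B, MB, ..., M^(n-1) B] with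
  B = [e_{v 0}, ..., e_{v (m-1)}]; its rank is the dimension of the span of its columns.\<close>
definition ctrb_columns :: "real^'n^'n \<Rightarrow> nat \<Rightarrow> (nat \<Rightarrow> 'n::finite) \<Rightarrow> (real^'n) set" where
  "ctrb_columns M m v = (\<Union>k<CARD('n). {matpow M k *v axis (v r) 1 | r. r < m})"

definition SSC :: "('n::finite \<Rightarrow> 'n \<Rightarrow> bool) \<Rightarrow> nat \<Rightarrow> (nat \<Rightarrow> 'n) \<Rightarrow> bool" where
  "SSC E m v \<longleftrightarrow> (\<forall>M\<in>qualclass E. dim (ctrb_columns M m v) = CARD('n))"

definition path_decomposition :: "('n \<Rightarrow> 'n \<Rightarrow> bool) \<Rightarrow> nat \<Rightarrow> (nat \<Rightarrow> 'n) \<Rightarrow> (nat \<Rightarrow> 'n set) \<Rightarrow> bool" where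
  "path_decomposition E m v V \<longleftrightarrow>
     (\<Union>r<m. V r) = UNIV \<and>
     (\<forall>r<m. \<forall>r'<m. r \<noteq> r' \<longrightarrow> V r \<inter> V r' = {}) \<and>
     (\<forall>r<m. v r \<in> V r \<and> induced_path_from E (V r) (v r))"

end

theory Submission
  imports Defs
begin


lemma matpow_comm: "matpow M k ** M = M ** matpow M k"
  by (induction k) (simp_all, metis matrix_mul_assoc)

lemma matpow_transpose:
  assumes "transpose M = M" shows "transpose (matpow M k) = matpow M k"
  using assms by (induction k) (auto simp: matrix_transpose_mul matpow_comm)

lemma inner_sym_mat:
  fixes A :: "real^'n^'n"
  assumes "transpose A = A" shows "inner x (A *v y) = inner (A *v x) y"
proof -
  have "inner x (A *v y) = inner (x v* A) y" by (simp add: dot_lmul_matrix)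
  also have "x v* A = transpose A *v x" by simp
  finally show ?thesis using assms by simp
qed

definition krylov :: "real^'n^'n \<Rightarrow> nat \<Rightarrow> (nat \<Rightarrow> 'n::finite) \<Rightarrow> nat \<Rightarrow> (real^'n) set" where
  "krylov M m v j = {matpow M k *v axis (v r) 1 | k r. k < j \<and> r < m}"

lemma krylov_stab:
  assumes H: "krylov M m v (Suc j) \<subseteq> span (krylov M m v j)" and r: "r < m"
  shows "matpow M t *v axis (v r) 1 \<in> span (krylov M m v j)"
proof -
  let ?T = "span (krylov M m v j)"
  have inv: "M *v y \<in> ?T" if "y \<in> ?T" for y
  proof -
    have lin: "linear ((*v) M)" by (simp add: matrix_vector_mul_linear)
    have "(*v) M ` krylov M m v j \<subseteq> krylov M m v (Suc j)"
    proof
      fix y assume "y \<in> (*v) M ` krylov M m v j"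
      then obtain k r where kr: "k < j" "r < m" "y = M *v (matpow M k *v axis (v r) 1)"
        unfolding krylov_def by blast
      hence "y = matpow M (Suc k) *v axis (v r) 1" by (simp add: matrix_vector_mul_assoc)
      with kr show "y \<in> krylov M m v (Suc j)" unfolding krylov_def by force
    qed
    hence "span ((*v) M ` krylov M m v j) \<subseteq> ?T"
      using H by (metis span_mono span_span subset_trans)
    moreover have "M *v y \<in> span ((*v) M ` krylov M m v j)"
      using that by (metis lin image_eqI span_linear_image)
    ultimately show ?thesis by blast
  qed
  show ?thesis
  proof (induction t)
    case 0
    have "matpow M 0 *v axis (v r) 1 \<in> krylov M m v (Suc j)"
      unfolding krylov_def using r by blast
    then show ?case using H by blast
  next
    case (Suc t)
    then show ?case using inv by (simp add: matrix_vector_mul_assoc[symmetric])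
  qed
qed

lemma krylov_mono: "j \<le> j' \<Longrightarrow> krylov M m v j \<subseteq> krylov M m v j'"
  unfolding krylov_def by fastforce

lemma krylov_full:
  fixes M :: "real^'n::finite^'n"
  assumes r: "r < m"
  shows "matpow M t *v axis (v r) 1 \<in> span (ctrb_columns M m v)"
proof -
  let ?n = "CARD('n)"
  have "\<exists>j\<le>?n. krylov M m v (Suc j) \<subseteq> span (krylov M m v j)"
  proof (rule ccontr)
    assume nex: "\<not> (\<exists>j\<le>?n. krylov M m v (Suc j) \<subseteq> span (krylov M m v j))"
    hence strict: "dim (krylov M m v j) < dim (krylov M m v (Suc j))" if "j \<le> ?n" for j
    proof -
      have "span (krylov M m v j) \<subseteq> span (krylov M m v (Suc j))"
        by (simp add: krylov_mono span_mono)
      moreover have "\<not> span (krylov M m v (Suc j)) \<subseteq> span (krylov M m v j)"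
        using nex that span_superset by blast
      ultimately show ?thesis by (intro dim_psubset) blast
    qed
    have "j \<le> Suc ?n \<Longrightarrow> dim (krylov M m v j) \<ge> j" for j
    proof (induction j)
      case (Suc j) then show ?case using strict[of j] by simp
    qed simp
    from this[of "Suc ?n"] have "dim (krylov M m v (Suc ?n)) \<ge> Suc ?n" by simp
    moreover have "dim (krylov M m v (Suc ?n)) \<le> ?n" by (rule dim_subset_UNIV_cart)
    ultimately show False by simp
  qed
  then obtain j where j: "j \<le> ?n" "krylov M m v (Suc j) \<subseteq> span (krylov M m v j)" by blast
  have "matpow M t *v axis (v r) 1 \<in> span (krylov M m v j)" by (rule krylov_stab[OF j(2) r])
  moreover have "krylov M m v j \<subseteq> ctrb_columns M m v"
    using j(1) unfolding krylov_def ctrb_columns_def by fastforce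
  ultimately show ?thesis using span_mono by blast
qed

lemma ssc_if:
  fixes M :: "real^'n::finite^'n"
  assumes "\<And>x. (\<And>r t. r < m \<Longrightarrow> inner x (matpow M t *v axis (v r) 1) = 0) \<Longrightarrow> x = 0"
  shows "dim (ctrb_columns M m v) = CARD('n)"
proof (rule ccontr)
  assume ne: "dim (ctrb_columns M m v) \<noteq> CARD('n)"
  have "dim (ctrb_columns M m v) < DIM(real^'n)"
    using ne dim_subset_UNIV_cart[of "ctrb_columns M m v"] by simp
  from orthogonal_to_subspace_exists[OF this] obtain x :: "real^'n" where x: "x \<noteq> 0" "\<And>y. y \<in> span (ctrb_columns M m v) \<Longrightarrow> orthogonal x y"
    by blast
  have "x = 0"
    by (rule assms) (use x(2) krylov_full[of _ m M _ v] in \<open>auto simp: orthogonal_def\<close>)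
  with x(1) show False by simp
qed

lemma not_ssc_if:
  fixes M :: "real^'n::finite^'n"
  assumes "x \<noteq> 0" "\<And>r t. r < m \<Longrightarrow> inner x (matpow M t *v axis (v r) 1) = 0"
  shows "dim (ctrb_columns M m v) < CARD('n)"
proof -
  have "ctrb_columns M m v \<subseteq> {y. inner x y = 0}"
    using assms(2) unfolding ctrb_columns_def by auto
  hence "dim (ctrb_columns M m v) \<le> dim {y. inner x y = 0}" by (rule dim_subset)
  also have "\<dots> = DIM(real^'n) - 1" using assms(1) by (rule dim_hyperplane)
  finally have "dim (ctrb_columns M m v) \<le> CARD('n) - 1" by simp
  moreover have "CARD('n) > 0" by simp
  ultimately show ?thesis by linarith
qed



lemma gpath_iff: "is_gpath E xs \<longleftrightarrow> xs \<noteq> [] \<and> distinct xs \<and> successively E xs"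
  unfolding is_gpath_def successively_conv_nth by blast

lemma simple_sym: "simple_graph E \<Longrightarrow> E x y \<Longrightarrow> E y x"
  unfolding simple_graph_def by blast

lemma simple_irrefl: "simple_graph E \<Longrightarrow> \<not> E x x"
  unfolding simple_graph_def by blast

lemma succ_take: "successively P xs \<Longrightarrow> successively P (take n xs)"
  by (metis append_take_drop_id successively_append_iff)

lemma succ_drop: "successively P xs \<Longrightarrow> successively P (drop n xs)"
  by (metis append_take_drop_id successively_append_iff)

definition slice :: "'a list \<Rightarrow> nat \<Rightarrow> nat \<Rightarrow> 'a list" where
  "slice p i j = take (Suc j - i) (drop i p)"

lemma slice_props:
  assumes "i \<le> j" "j < length p"
  shows "slice p i j \<noteq> []" "length (slice p i j) = Suc j - i"
    "hd (slice p i j) = p ! i" "last (slice p i j) = p ! j"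
    "set (slice p i j) \<subseteq> set p"
    "distinct p \<Longrightarrow> distinct (slice p i j)"
    "successively E p \<Longrightarrow> successively E (slice p i j)"
    "\<And>k. k < length (slice p i j) \<Longrightarrow> slice p i j ! k = p ! (i + k)"
proof -
  show "length (slice p i j) = Suc j - i" using assms by (simp add: slice_def)
  thus ne: "slice p i j \<noteq> []" using assms by auto
  show "\<And>k. k < length (slice p i j) \<Longrightarrow> slice p i j ! k = p ! (i + k)"
    using assms by (simp add: slice_def)
  show "hd (slice p i j) = p ! i" using assms by (simp add: slice_def hd_drop_conv_nth)
  show "last (slice p i j) = p ! j"
  proof -
    have "last (slice p i j) = slice p i j ! (length (slice p i j) - 1)"
      using ne by (simp add: last_conv_nth)
    also have "\<dots> = p ! (i + (j - i))" using assms by (simp add: slice_def)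
    finally show ?thesis using assms by simp
  qed
  show "set (slice p i j) \<subseteq> set p" unfolding slice_def
    by (meson in_set_dropD in_set_takeD subsetI)
  show "distinct p \<Longrightarrow> distinct (slice p i j)" by (simp add: slice_def)
  show "successively E p \<Longrightarrow> successively E (slice p i j)"
    by (simp add: slice_def succ_take succ_drop)
qed

lemma chord:
  assumes sg: "simple_graph E" and ac: "graph_acyclic E"
    and p: "is_gpath E p" and ij: "i < j" "j < length p" and e: "E (p ! i) (p ! j)"
  shows "j = Suc i"
proof (rule ccontr)
  assume "j \<noteq> Suc i"
  hence len: "length (slice p i j) \<ge> 3" using ij slice_props(2)[of i j p] by simp
  have "is_gpath E (slice p i j)"
    using p ij slice_props[of i j p] unfolding gpath_iff by simp
  moreover have "E (last (slice p i j)) (hd (slice p i j))"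
    using ij slice_props[of i j p] e simple_sym[OF sg] by simp
  ultimately show False using ac len unfolding graph_acyclic_def by blast
qed

lemma gpath_induced:
  assumes sg: "simple_graph E" and ac: "graph_acyclic E" and p: "is_gpath E p"
  shows "\<forall>i j. i < length p \<and> j < length p \<and> E (p ! i) (p ! j) \<longrightarrow> i = Suc j \<or> j = Suc i"
proof (intro allI impI)
  fix i j assume h: "i < length p \<and> j < length p \<and> E (p ! i) (p ! j)"
  consider "i < j" | "j < i" | "i = j" by linarith
  then show "i = Suc j \<or> j = Suc i"
  proof cases
    case 1 then show ?thesis using chord[OF sg ac p 1] h by blast
  next
    case 2 then show ?thesis using chord[OF sg ac p 2] h simple_sym[OF sg] by blast
  next
    case 3 then show ?thesis using h simple_irrefl[OF sg] by simp
  qed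
qed

lemma path_between:
  assumes sg: "simple_graph E" and p: "is_gpath E p" and a: "a \<in> set p" and b: "b \<in> set p"
  shows "\<exists>s. is_gpath E s \<and> hd s = a \<and> last s = b \<and> set s \<subseteq> set p"
proof -
  obtain i j where i: "i < length p" "a = p ! i" and j: "j < length p" "b = p ! j"
    using a b by (metis in_set_conv_nth)
  have pp: "distinct p" "successively E p" using p gpath_iff by auto
  show ?thesis
  proof (cases "i \<le> j")
    case True
    then show ?thesis using slice_props[of i j p] j i pp unfolding gpath_iff by (intro exI[of _ "slice p i j"]) auto
  next
    case False
    hence ji: "j \<le> i" by simp
    have s: "successively (\<lambda>x y. E y x) (slice p j i)"
      using slice_props(7)[OF ji i(1) pp(2)] simple_sym[OF sg] by (metis successively_mono)
    show ?thesis using slice_props[of j i p] j i pp ji s unfolding gpath_iff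
      by (intro exI[of _ "rev (slice p j i)"]) (auto simp: hd_rev last_rev)
  qed
qed

lemma leaf_exists:
  fixes U :: "'n::finite set"
  assumes sg: "simple_graph E" and ac: "graph_acyclic E" and U: "U \<noteq> {}"
  shows "\<exists>l\<in>U. \<forall>u u'. u \<in> U \<and> u' \<in> U \<and> E l u \<and> E l u' \<longrightarrow> u = u'"
proof -
  obtain u0 where u0: "u0 \<in> U" using U by blast
  let ?P = "\<lambda>xs. is_gpath E xs \<and> set xs \<subseteq> U"
  have P0: "?P [u0]" using u0 unfolding is_gpath_def by simp
  have bnd: "\<forall>y. ?P y \<longrightarrow> length y < Suc (card U)"
  proof (intro allI impI)
    fix y assume "?P y"
    hence "length y = card (set y)" using distinct_card[of y] by (simp add: is_gpath_def)
    moreover have "card (set y) \<le> card U" using \<open>?P y\<close> by (intro card_mono) auto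
    ultimately show "length y < Suc (card U)" by simp
  qed
  obtain xs where xs: "?P xs" and mx: "\<forall>y. ?P y \<longrightarrow> length y \<le> length xs"
    using Lattices_Big.ex_has_greatest_nat[of ?P "[u0]" length "Suc (card U)", OF P0 bnd] by blast
  have ne: "xs \<noteq> []" using xs is_gpath_def by blast
  let ?l = "last xs"
  have nb: "u = xs ! (length xs - 2)" if "u \<in> U" "E ?l u" for u
  proof -
    have "u \<in> set xs"
    proof (rule ccontr)
      assume "u \<notin> set xs"
      hence "?P (xs @ [u])" using xs that ne unfolding gpath_iff
        by (auto simp: successively_append_iff)
      with mx show False by fastforce
    qed
    then obtain i where i: "i < length xs" "u = xs ! i" by (metis in_set_conv_nth)
    have lxs: "?l = xs ! (length xs - 1)" using ne by (simp add: last_conv_nth)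
    have "i \<noteq> length xs - 1" using that(2) lxs i simple_irrefl[OF sg] by auto
    hence "i < length xs - 1" using i by simp
    moreover have "E (xs ! i) (xs ! (length xs - 1))" using that(2) lxs i simple_sym[OF sg] by simp
    ultimately have "length xs - 1 = Suc i" using chord[OF sg ac, of xs i "length xs - 1"] xs ne by simp
    hence "i = length xs - 2" by simp
    thus ?thesis using i by simp
  qed
  show ?thesis
    using nb xs ne by (intro bexI[of _ ?l]) auto
qed



definition nbw :: "('n \<Rightarrow> 'n \<Rightarrow> bool) \<Rightarrow> 'n list \<Rightarrow> bool" where
  "nbw E ws \<longleftrightarrow> successively E ws \<and> (\<forall>i. Suc (Suc i) < length ws \<longrightarrow> ws ! i \<noteq> ws ! Suc (Suc i))"

lemma nbw_distinct:
  assumes sg: "simple_graph E" and ac: "graph_acyclic E" and w: "nbw E ws"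
  shows "distinct ws"
proof (rule ccontr)
  assume nd: "\<not> distinct ws"
  let ?R = "\<lambda>d. \<exists>i. i + d < length ws \<and> 0 < d \<and> ws ! i = ws ! (i + d)"
  have "\<exists>d. ?R d"
  proof -
    obtain i j where "i < length ws" "j < length ws" "i \<noteq> j" "ws ! i = ws ! j"
      using nd by (metis distinct_conv_nth)
    thus ?thesis
      by (cases "i < j") (rule exI[of _ "j - i"], rule exI[of _ i], simp,
          rule exI[of _ "i - j"], rule exI[of _ j], simp)
  qed
  then obtain d where d: "?R d" and dmin: "\<And>d'. d' < d \<Longrightarrow> \<not> ?R d'"
    using exists_least_iff[of ?R] by blast
  then obtain i where i: "i + d < length ws" "0 < d" "ws ! i = ws ! (i + d)" by blast
  have succ: "successively E ws" using w nbw_def by blast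
  have adj: "E (ws ! k) (ws ! Suc k)" if "Suc k < length ws" for k
    using succ that successively_nth by blast
  consider "d = 1" | "d = 2" | "d \<ge> 3" using i by linarith
  then show False
  proof cases
    case 1 then show ?thesis using adj[of i] i simple_irrefl[OF sg] by simp
  next
    case 2 then show ?thesis using w i unfolding nbw_def by (simp add: numeral_2_eq_2)
  next
    case 3
    let ?ys = "slice ws i (i + d - 1)"
    have ii: "i \<le> i + d - 1" "i + d - 1 < length ws" using i by auto
    have dist: "distinct ?ys"
    proof (rule ccontr)
      assume "\<not> distinct ?ys"
      then obtain p q where pq: "p < length ?ys" "q < length ?ys" "p < q" "?ys ! p = ?ys ! q"
        by (metis distinct_conv_nth linorder_neqE_nat)
      have "length ?ys = d" using slice_props(2)[OF ii] i by simp
      hence "?R (q - p)" using pq slice_props(8)[OF ii] i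
        by (intro exI[of _ "i + p"]) (auto simp: add.assoc)
      moreover have "q - p < d" using pq \<open>length ?ys = d\<close> by simp
      ultimately show False using dmin by blast
    qed
    have "is_gpath E ?ys" unfolding gpath_iff using slice_props[OF ii] dist succ by simp
    moreover have "length ?ys \<ge> 3" using slice_props(2)[OF ii] 3 by simp
    moreover have "E (last ?ys) (hd ?ys)"
    proof -
      have "last ?ys = ws ! (i + d - 1)" "hd ?ys = ws ! (i + d)"
        using slice_props(3,4)[OF ii] i by auto
      moreover have "E (ws ! (i + d - 1)) (ws ! Suc (i + d - 1))" using adj[of "i + d - 1"] i by simp
      ultimately show ?thesis using i by simp
    qed
    ultimately show False using ac unfolding graph_acyclic_def by blast
  qed
qed

lemma nbw_length:
  fixes ws :: "'n::finite list"
  assumes "simple_graph E" "graph_acyclic E" "nbw E ws"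
  shows "length ws \<le> CARD('n)"
  using nbw_distinct[OF assms] by (metis card_mono distinct_card finite subset_UNIV)

lemma distinct_nbw: "distinct ws \<Longrightarrow> successively E ws \<Longrightarrow> nbw E ws"
  unfolding nbw_def by (simp add: nth_eq_iff_index_eq)

lemma nbw_append:
  assumes x: "nbw E xs" and y: "nbw E ys" and ne: "xs \<noteq> []" "ys \<noteq> []"
    and e: "E (last xs) (hd ys)"
    and c1: "length xs \<ge> 2 \<Longrightarrow> xs ! (length xs - 2) \<noteq> hd ys"
    and c2: "length ys \<ge> 2 \<Longrightarrow> last xs \<noteq> ys ! 1"
  shows "nbw E (xs @ ys)"
  unfolding nbw_def
proof (intro conjI allI impI)
  show "successively E (xs @ ys)" using x y e ne by (simp add: nbw_def successively_append_iff)
next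
  fix i assume i: "Suc (Suc i) < length (xs @ ys)"
  consider "Suc (Suc i) < length xs" | "i = length xs - 2" "length xs \<ge> 2"
    | "i = length xs - 1" | "i \<ge> length xs" by linarith
  then show "(xs @ ys) ! i \<noteq> (xs @ ys) ! Suc (Suc i)"
  proof cases
    case 1 then show ?thesis using x unfolding nbw_def by (simp add: nth_append)
  next
    case 2
    hence "(xs @ ys) ! i = xs ! (length xs - 2)" "(xs @ ys) ! Suc (Suc i) = hd ys"
      using ne by (auto simp: nth_append hd_conv_nth)
    then show ?thesis using c1 2 by simp
  next
    case 3
    hence "(xs @ ys) ! i = last xs" "(xs @ ys) ! Suc (Suc i) = ys ! 1" "length ys \<ge> 2"
      using ne i by (auto simp: nth_append last_conv_nth)
    then show ?thesis using c2 by simp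
  next
    case 4
    hence "(xs @ ys) ! i = ys ! (i - length xs)" "(xs @ ys) ! Suc (Suc i) = ys ! Suc (Suc (i - length xs))"
      "Suc (Suc (i - length xs)) < length ys"
      using i by (auto simp: nth_append Suc_diff_le)
    then show ?thesis using y unfolding nbw_def by simp
  qed
qed



lemma sign_exists:
  fixes U :: "'n::finite set" and C :: "'n set"
  assumes sg: "simple_graph E" and ac: "graph_acyclic E"
  shows "\<exists>s. \<forall>c\<in>C \<inter> U. (\<exists>w1 w2. w1 \<noteq> w2 \<and> w1 \<in> U - C \<and> w2 \<in> U - C \<and> E c w1 \<and> E c w2)
            \<longrightarrow> (\<exists>w\<in>U - C. E c w \<and> s w) \<and> (\<exists>w\<in>U - C. E c w \<and> \<not> s w)"
proof (induction "card U" arbitrary: U rule: less_induct)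
  case less
  show ?case
  proof (cases "U = {}")
    case True then show ?thesis by blast
  next
    case False
    obtain l where l: "l \<in> U" and lf: "\<And>u u'. u \<in> U \<Longrightarrow> u' \<in> U \<Longrightarrow> E l u \<Longrightarrow> E l u' \<Longrightarrow> u = u'"
      using leaf_exists[OF sg ac False] by blast
    let ?U' = "U - {l}"
    have "card ?U' < card U" using l by (metis card_Diff1_less finite)
    then obtain s where s: "\<forall>c\<in>C \<inter> ?U'. (\<exists>w1 w2. w1 \<noteq> w2 \<and> w1 \<in> ?U' - C \<and> w2 \<in> ?U' - C \<and> E c w1 \<and> E c w2)
            \<longrightarrow> (\<exists>w\<in>?U' - C. E c w \<and> s w) \<and> (\<exists>w\<in>?U' - C. E c w \<and> \<not> s w)"
      using less by blast
    show ?thesis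
    proof (cases "l \<in> C")
      case True
      show ?thesis
      proof (intro exI[of _ s] ballI impI)
        fix c assume c: "c \<in> C \<inter> U" and h: "\<exists>w1 w2. w1 \<noteq> w2 \<and> w1 \<in> U - C \<and> w2 \<in> U - C \<and> E c w1 \<and> E c w2"
        have "c \<noteq> l"
        proof
          assume "c = l"
          then show False using h lf by blast
        qed
        hence "c \<in> C \<inter> ?U'" using c by blast
        moreover have "\<exists>w1 w2. w1 \<noteq> w2 \<and> w1 \<in> ?U' - C \<and> w2 \<in> ?U' - C \<and> E c w1 \<and> E c w2"
          using h True by blast
        ultimately show "(\<exists>w\<in>U - C. E c w \<and> s w) \<and> (\<exists>w\<in>U - C. E c w \<and> \<not> s w)"
          using s by blast
      qed
    next
      case lC: False
      let ?Q = "\<lambda>w. \<exists>c. c \<in> U \<and> E l c \<and> w \<in> ?U' - C \<and> E c w"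
      define s' where "s' = s(l := (if \<exists>w. ?Q w then \<not> s (SOME w. ?Q w) else True))"
      show ?thesis
      proof (intro exI[of _ s'] ballI impI)
        fix c assume c: "c \<in> C \<inter> U" and h: "\<exists>w1 w2. w1 \<noteq> w2 \<and> w1 \<in> U - C \<and> w2 \<in> U - C \<and> E c w1 \<and> E c w2"
        have cl: "c \<noteq> l" using c lC by blast
        show "(\<exists>w\<in>U - C. E c w \<and> s' w) \<and> (\<exists>w\<in>U - C. E c w \<and> \<not> s' w)"
        proof (cases "E c l")
          case True
          obtain w where w: "w \<in> ?U' - C" "E c w" using h by blast
          have Ex: "\<exists>w. ?Q w" using w True c simple_sym[OF sg] by blast
          let ?w0 = "SOME w. ?Q w"
          have "?Q ?w0" using someI_ex[OF Ex] .
          then obtain c0 where c0: "c0 \<in> U" "E l c0" "?w0 \<in> ?U' - C" "E c0 ?w0" by blast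
          have "c0 = c" using lf[of c0 c] c0 c True simple_sym[OF sg] by blast
          have sl: "s' l = (\<not> s ?w0)" unfolding s'_def using Ex by simp
          have sw0: "s' ?w0 = s ?w0" unfolding s'_def using c0 by auto
          have l1: "l \<in> U - C" "E c l" using l lC True by auto
          show ?thesis
          proof (cases "s ?w0")
            case True
            then show ?thesis using sl sw0 c0 l1 \<open>c0 = c\<close> by blast
          next
            case False
            then show ?thesis using sl sw0 c0 l1 \<open>c0 = c\<close> by blast
          qed
        next
          case False
          have "c \<in> C \<inter> ?U'" using c cl by blast
          moreover have "\<exists>w1 w2. w1 \<noteq> w2 \<and> w1 \<in> ?U' - C \<and> w2 \<in> ?U' - C \<and> E c w1 \<and> E c w2"
            using h False by blast
          ultimately have "(\<exists>w\<in>?U' - C. E c w \<and> s w) \<and> (\<exists>w\<in>?U' - C. E c w \<and> \<not> s w)"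
            using s by blast
          moreover have "\<And>w. w \<in> ?U' \<Longrightarrow> s' w = s w" unfolding s'_def by auto
          ultimately show ?thesis by blast
        qed
      qed
    qed
  qed
qed

lemma two_edges:
  assumes sg: "simple_graph E" and ac: "graph_acyclic E"
    and p: "is_gpath E p" and q: "is_gpath E q" and dj: "set p \<inter> set q = {}"
    and x: "x1 \<in> set p" "x2 \<in> set p" and y: "y1 \<in> set q" "y2 \<in> set q"
    and e: "E x1 y1" "E x2 y2" and ne: "(x1, y1) \<noteq> (x2, y2)"
  shows False
proof -
  obtain s1 where s1: "is_gpath E s1" "hd s1 = x1" "last s1 = x2" "set s1 \<subseteq> set p"
    using path_between[OF sg p x] by blast
  obtain s2 where s2: "is_gpath E s2" "hd s2 = y2" "last s2 = y1" "set s2 \<subseteq> set q"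
    using path_between[OF sg q y(2) y(1)] by blast
  let ?c = "s1 @ s2"
  have ne1: "s1 \<noteq> []" "s2 \<noteq> []" using s1 s2 gpath_iff by auto
  have "is_gpath E ?c"
    using s1 s2 ne1 dj e unfolding gpath_iff by (auto simp: successively_append_iff)
  moreover have "E (last ?c) (hd ?c)" using s1 s2 ne1 e simple_sym[OF sg] by simp
  moreover have "length ?c \<ge> 3"
  proof (rule ccontr)
    assume "\<not> length ?c \<ge> 3"
    moreover have "length s1 \<ge> 1" "length s2 \<ge> 1" using ne1 by (auto simp: Suc_le_eq)
    ultimately have "length s1 = 1 \<and> length s2 = 1" by simp
    hence "x1 = x2" "y1 = y2" using s1 s2 by (auto simp: length_Suc_conv)
    thus False using ne by simp
  qed
  ultimately show False using ac unfolding graph_acyclic_def by blast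
qed



lemma decomp_forces:
  fixes E :: "'n::finite \<Rightarrow> 'n \<Rightarrow> bool" and P :: "nat \<Rightarrow> 'n list"
  assumes sg: "simple_graph E" and ac: "graph_acyclic E"
    and Pg: "\<And>r. r < m \<Longrightarrow> is_gpath E (P r) \<and> hd (P r) = v r"
    and cov: "(\<Union>r<m. set (P r)) = UNIV"
    and dj: "\<And>r r'. r < m \<Longrightarrow> r' < m \<Longrightarrow> r \<noteq> r' \<Longrightarrow> set (P r) \<inter> set (P r') = {}"
    and Zv: "\<And>r. r < m \<Longrightarrow> v r \<in> Z"
    and cl: "\<And>c w. c \<in> Z \<Longrightarrow> E c w \<Longrightarrow> w \<notin> Z \<Longrightarrow> \<exists>u. E c u \<and> u \<noteq> w \<and> u \<notin> Z"
  shows "Z = UNIV"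
proof (rule ccontr)
  assume "Z \<noteq> UNIV"
  then obtain z where z: "z \<notin> Z" by blast
  define nc where "nc r \<longleftrightarrow> r < m \<and> \<not> set (P r) \<subseteq> Z" for r
  define k where "k r = (LEAST i. i < length (P r) \<and> P r ! i \<notin> Z)" for r
  define a where "a r = P r ! (k r - 1)" for r
  have kprops: "k r < length (P r) \<and> P r ! k r \<notin> Z \<and> (\<forall>i < k r. P r ! i \<in> Z) \<and> k r \<ge> 1 \<and>
      a r \<in> Z \<and> a r \<in> set (P r) \<and> E (a r) (P r ! k r)" if "nc r" for r
  proof -
    have ex: "\<exists>i. i < length (P r) \<and> P r ! i \<notin> Z"
      using that unfolding nc_def by (metis in_set_conv_nth subsetI)
    have k1: "k r < length (P r) \<and> P r ! k r \<notin> Z"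
      unfolding k_def using LeastI_ex[OF ex] .
    have k2: "\<forall>i < k r. P r ! i \<in> Z"
    proof (intro allI impI)
      fix i assume "i < k r"
      hence "\<not> (i < length (P r) \<and> P r ! i \<notin> Z)" unfolding k_def by (rule not_less_Least)
      thus "P r ! i \<in> Z" using \<open>i < k r\<close> k1 by simp
    qed
    have rm: "r < m" using that nc_def by blast
    have g: "is_gpath E (P r)" "hd (P r) = v r" using Pg[OF rm] by auto
    have "P r ! 0 = v r" using g by (metis hd_conv_nth is_gpath_def)
    hence k3: "k r \<ge> 1" using k1 Zv[OF rm] by (metis less_one not_less)
    have "a r \<in> Z" unfolding a_def using k2 k3 by simp
    moreover have "a r \<in> set (P r)" unfolding a_def using k1 by (meson diff_le_self le_less_trans nth_mem)
    moreover have "E (a r) (P r ! k r)"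
      using g(1) k1 k3 unfolding a_def is_gpath_def by (metis Suc_diff_1 less_le_trans zero_less_one)
    ultimately show ?thesis using k1 k2 k3 by blast
  qed
  have step: "\<exists>r' e. nc r' \<and> r' \<noteq> r \<and> e < length (P r') \<and> E (a r) (P r' ! e) \<and> P r' ! e \<notin> Z"
    if "nc r" for r
  proof -
    note kp = kprops[OF that]
    obtain y where y: "E (a r) y" "y \<noteq> P r ! k r" "y \<notin> Z" using cl kp by blast
    obtain r' where r': "r' < m" "y \<in> set (P r')" using cov by blast
    then obtain e where e: "e < length (P r')" "y = P r' ! e" by (metis in_set_conv_nth)
    have rm: "r < m" using that nc_def by blast
    have "r' \<noteq> r"
    proof
      assume rr: "r' = r"
      have ind: "\<forall>i j. i < length (P r) \<and> j < length (P r) \<and> E (P r ! i) (P r ! j) \<longrightarrow> i = Suc j \<or> j = Suc i"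
        using gpath_induced[OF sg ac, of "P r"] Pg[OF rm] by blast
      have "k r - 1 < length (P r)" using kp by linarith
      moreover have "E (P r ! (k r - 1)) (P r ! e)" using y e rr unfolding a_def by simp
      ultimately have "k r - 1 = Suc e \<or> e = Suc (k r - 1)"
        using ind e rr by blast
      moreover have "e \<noteq> k r" using e y rr by auto
      moreover have "e \<ge> k r" using kp e y rr by (metis not_le)
      ultimately show False using kp by simp
    qed
    moreover have "nc r'" using r' y unfolding nc_def by blast
    ultimately show ?thesis using e y by blast
  qed
  obtain r0 where r0: "r0 < m" "z \<in> set (P r0)" using cov by blast
  hence nc0: "nc r0" using z nc_def by blast
  have walk: "\<exists>r ws. nc r \<and> nbw E ws \<and> ws \<noteq> [] \<and> N \<le> length ws \<and> last ws = a r \<and>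
                  (2 \<le> length ws \<longrightarrow> ws ! (length ws - 2) \<in> set (P r))" for N
  proof (induction N)
    case 0
    show ?case using nc0 by (intro exI[of _ r0] exI[of _ "[a r0]"]) (simp add: nbw_def)
  next
    case (Suc N)
    then obtain r ws where w: "nc r" "nbw E ws" "ws \<noteq> []" "N \<le> length ws" "last ws = a r"
      "2 \<le> length ws \<longrightarrow> ws ! (length ws - 2) \<in> set (P r)" by blast
    obtain r' e where re: "nc r'" "r' \<noteq> r" "e < length (P r')" "E (a r) (P r' ! e)" "P r' ! e \<notin> Z"
      using step[OF w(1)] by blast
    note kp' = kprops[OF re(1)]
    have rm: "r < m" "r' < m" using w(1) re(1) nc_def by auto
    have gp': "is_gpath E (P r')" using Pg rm by blast
    obtain s where s: "is_gpath E s" "hd s = P r' ! e" "last s = a r'" "set s \<subseteq> set (P r')"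
      using path_between[OF sg gp', of "P r' ! e" "a r'"] re(3) kp' by auto
    have sne: "s \<noteq> []" using s gpath_iff by auto
    have "P r' ! e \<noteq> a r'" using re(5) kp' by auto
    hence slen: "length s \<ge> 2" using s sne
      by (metis One_nat_def hd_conv_nth last_conv_nth diff_self_eq_0 le_less_linear less_2_cases
          length_0_conv not_less_zero)
    have djr: "set (P r) \<inter> set (P r') = {}" using dj rm re(2) by blast
    have ar: "a r \<in> set (P r)" using kprops[OF w(1)] by blast
    have "nbw E (ws @ s)"
    proof (rule nbw_append[OF w(2) _ w(3) sne])
      show "nbw E s" using s by (intro distinct_nbw) (auto simp: gpath_iff)
      show "E (last ws) (hd s)" using w(5) s re(4) by simp
      show "ws ! (length ws - 2) \<noteq> hd s" if "2 \<le> length ws"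
        using w(6) that s(2) djr re(3) by (metis disjoint_iff nth_mem)
      show "last ws \<noteq> s ! 1" if "2 \<le> length s"
      proof -
        have "s ! 1 \<in> set (P r')" using that s(4) by (metis Suc_1 Suc_le_lessD nth_mem subsetD)
        moreover have "a r \<notin> set (P r')" using ar djr by blast
        ultimately show ?thesis using w(5) by metis
      qed
    qed
    moreover have "last (ws @ s) = a r'" using s sne by simp
    moreover have "(ws @ s) ! (length (ws @ s) - 2) \<in> set (P r')"
    proof -
      have "length (ws @ s) - 2 = length ws + (length s - 2)" using slen by simp
      hence "(ws @ s) ! (length (ws @ s) - 2) = s ! (length s - 2)"
        by (metis nth_append_length_plus)
      moreover have "s ! (length s - 2) \<in> set s" using slen by simp
      ultimately show ?thesis using s(4) by auto
    qed
    moreover have "Suc N \<le> length (ws @ s)" using w(4) slen by simp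
    ultimately show ?case using re(1) sne by blast
  qed
  obtain r ws where "nbw E ws" "Suc (CARD('n)) \<le> length ws" using walk[of "Suc CARD('n)"] by blast
  thus False using nbw_length[OF sg ac] by fastforce
qed



definition good :: "('n \<Rightarrow> 'n \<Rightarrow> bool) \<Rightarrow> nat \<Rightarrow> (nat \<Rightarrow> 'n) \<Rightarrow> 'n set \<Rightarrow> (nat \<Rightarrow> 'n list) \<Rightarrow> bool" where
  "good E m v S P \<longleftrightarrow> (\<forall>r<m. is_gpath E (P r) \<and> hd (P r) = v r) \<and> (\<Union>r<m. set (P r)) = S \<and>
     (\<forall>r<m. \<forall>r'<m. r \<noteq> r' \<longrightarrow> set (P r) \<inter> set (P r') = {}) \<and>
     (\<forall>r<m. \<forall>i u. Suc i < length (P r) \<and> E (P r ! i) u \<longrightarrow> u \<in> S)"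

lemma closure_exists:
  fixes E :: "'n::finite \<Rightarrow> 'n \<Rightarrow> bool"
  assumes inj: "inj_on v {..<m}"
  shows "\<exists>S P. good E m v S P \<and> (\<forall>c w. c \<in> S \<and> E c w \<and> w \<notin> S \<longrightarrow> (\<exists>u. E c u \<and> u \<noteq> w \<and> u \<notin> S))"
proof -
  let ?Q = "\<lambda>S. \<exists>P. good E m v S P"
  have Q0: "?Q (v ` {..<m})"
  proof (intro exI[of _ "\<lambda>r. [v r]"])
    show "good E m v (v ` {..<m}) (\<lambda>r. [v r])"
      unfolding good_def is_gpath_def using inj by (auto simp: inj_on_def)
  qed
  have bnd: "\<forall>S. ?Q S \<longrightarrow> card S < Suc CARD('n)"
    by (simp add: card_mono le_imp_less_Suc)
  have "\<exists>S. ?Q S \<and> (\<forall>S'. ?Q S' \<longrightarrow> card S' \<le> card S)"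
    by (rule Lattices_Big.ex_has_greatest_nat[of ?Q _ card, OF Q0 bnd])
  then obtain S where SS: "?Q S \<and> (\<forall>S'. ?Q S' \<longrightarrow> card S' \<le> card S)" ..
  have S: "?Q S" and mx: "\<forall>S'. ?Q S' \<longrightarrow> card S' \<le> card S" using SS by auto
  obtain P where P: "good E m v S P" using S by blast
  have P4: "\<And>r i u. r < m \<Longrightarrow> Suc i < length (P r) \<Longrightarrow> E (P r ! i) u \<Longrightarrow> u \<in> S"
    using P unfolding good_def by blast
  have "\<forall>c w. c \<in> S \<and> E c w \<and> w \<notin> S \<longrightarrow> (\<exists>u. E c u \<and> u \<noteq> w \<and> u \<notin> S)"
  proof (intro allI impI, rule ccontr)
    fix c w assume h: "c \<in> S \<and> E c w \<and> w \<notin> S" and nu: "\<not> (\<exists>u. E c u \<and> u \<noteq> w \<and> u \<notin> S)"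
    obtain r where r: "r < m" "c \<in> set (P r)" using h P unfolding good_def by blast
    then obtain i where i: "i < length (P r)" "c = P r ! i" by (metis in_set_conv_nth)
    have gp: "is_gpath E (P r)" "hd (P r) = v r" using P r unfolding good_def by auto
    have "\<not> Suc i < length (P r)" using P4[OF r(1), of i w] i h by blast
    hence last: "c = last (P r)" using i gp by (metis Suc_lessI diff_Suc_1 is_gpath_def last_conv_nth)
    define P' where "P' = P(r := P r @ [w])"
    have wP: "w \<notin> set (P r')" if "r' < m" for r'
      using h P that unfolding good_def by blast
    have c1: "is_gpath E (P' r') \<and> hd (P' r') = v r'" if r': "r' < m" for r'
    proof (cases "r' = r")
      case True
      then show ?thesis using gp wP[OF r(1)] h last unfolding P'_def gpath_iff
        by (auto simp: successively_append_iff)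
    next
      case False
      then show ?thesis using P r' unfolding P'_def good_def by auto
    qed
    have c2: "(\<Union>r<m. set (P' r)) = insert w S"
      using P r unfolding P'_def good_def by (auto split: if_splits)
    have c3: "set (P' r1) \<inter> set (P' r2) = {}" if "r1 < m" "r2 < m" "r1 \<noteq> r2" for r1 r2
      using P wP that unfolding P'_def good_def by auto
    have c4: "u \<in> insert w S" if r': "r' < m" and iu: "Suc i' < length (P' r') \<and> E (P' r' ! i') u" for r' i' u
    proof (cases "r' = r")
      case False
      then show ?thesis using P r' iu unfolding P'_def good_def by auto
    next
      case True
      show ?thesis
      proof (cases "Suc i' < length (P r)")
        case True
        then show ?thesis using P r iu \<open>r' = r\<close> unfolding P'_def good_def by (auto simp: nth_append)
      next
        case False
        hence "i' = length (P r) - 1" using iu \<open>r' = r\<close> unfolding P'_def by auto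
        hence "P' r' ! i' = c" using last gp \<open>r' = r\<close> unfolding P'_def
          by (metis fun_upd_same is_gpath_def last_conv_nth diff_less length_greater_0_conv
              nth_append zero_less_one)
        then show ?thesis using nu iu by auto
      qed
    qed
    have "good E m v (insert w S) P'"
      unfolding good_def using c1 c2 c3 c4 by blast
    hence "card (insert w S) \<le> card S" using mx by blast
    moreover have "card (insert w S) = Suc (card S)" using h by simp
    ultimately show False by simp
  qed
  then show ?thesis using P by blast
qed



lemma bad_matrix:
  fixes E :: "'n::finite \<Rightarrow> 'n \<Rightarrow> bool" and C :: "'n set" and s :: "'n \<Rightarrow> bool"
  assumes sg: "simple_graph E" and nC: "C \<noteq> UNIV"
    and sgn: "\<And>c. c \<in> C \<Longrightarrow> (\<exists>w. w \<notin> C \<and> E c w) \<Longrightarrow>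
                 (\<exists>w. w \<notin> C \<and> E c w \<and> s w) \<and> (\<exists>w. w \<notin> C \<and> E c w \<and> \<not> s w)"
  shows "\<exists>M x. M \<in> qualclass E \<and> x \<noteq> 0 \<and> (\<forall>i\<in>C. x $ i = 0) \<and>
           (\<forall>t y. inner x (matpow M t *v y) = inner (matpow M t *v x) y) \<and>
           (\<exists>K. \<forall>t. matpow M t *v x = (K ^ t) *\<^sub>R x)"
proof -
  define x :: "real^'n" where "x = (\<chi> i. if i \<in> C then 0 else if s i then 1 else -1)"
  define Pc where "Pc c = {w. w \<notin> C \<and> E c w \<and> s w}" for c
  define Nc where "Nc c = {w. w \<notin> C \<and> E c w \<and> \<not> s w}" for c
  define wt where "wt c w = (if s w then 1 / real (card (Pc c)) else 1 / real (card (Nc c)))" for c w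
  define A where "A i j = (if E i j then (if i \<in> C \<and> j \<notin> C then wt i j
       else if i \<notin> C \<and> j \<in> C then wt j i else 1) else 0)" for i j
  define N where "N i = {j. E i j}" for i
  define d where "d i = (if i \<in> C then 0 else - (x $ i) * (\<Sum>j\<in>N i. A i j * x $ j))" for i
  define K0 where "K0 = 1 + (\<Sum>i\<in>UNIV. \<bar>d i\<bar> + (\<Sum>j\<in>N i. A i j))"
  define M :: "real^'n^'n" where "M = (\<chi> i j. if i = j then d i - K0 else A i j)"
  have wt_pos: "wt c w > 0" if "w \<notin> C" "E c w" for c w
  proof (cases "s w")
    case True
    hence "w \<in> Pc c" using that Pc_def by auto
    hence "card (Pc c) > 0" using card_gt_0_iff by fastforce
    then show ?thesis using True wt_def by simp
  next
    case False
    hence "w \<in> Nc c" using that Nc_def by auto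
    hence "card (Nc c) > 0" using card_gt_0_iff by fastforce
    then show ?thesis using False wt_def by simp
  qed
  have A_pos: "A i j > 0" if "E i j" for i j
    using that wt_pos[of j i] wt_pos[of i j] simple_sym[OF sg, of i j] unfolding A_def by auto
  have A_nn: "A i j \<ge> 0" for i j
    using A_pos[of i j] unfolding A_def by (cases "E i j") auto
  have A_sym: "A i j = A j i" for i j
    using simple_sym[OF sg, of i j] simple_sym[OF sg, of j i] unfolding A_def by auto
  have A_zero: "A i j = 0" if "\<not> E i j" for i j using that A_def by simp
  have iN: "i \<notin> N i" for i using simple_irrefl[OF sg] N_def by auto
  have xsq: "x $ i * x $ i = 1" if "i \<notin> C" for i using that x_def by auto
  have xC: "x $ i = 0" if "i \<in> C" for i using that x_def by auto
  have row: "d i * x $ i + (\<Sum>j\<in>N i. A i j * x $ j) = 0" for i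
  proof (cases "i \<in> C")
    case False
    then show ?thesis unfolding d_def using xsq[OF False] by (simp add: algebra_simps)
  next
    case True
    have fin: "finite (N i)" by simp
    have split: "(\<Sum>j\<in>N i. A i j * x $ j) = (\<Sum>j\<in>Pc i. A i j * x $ j) + (\<Sum>j\<in>Nc i. A i j * x $ j)"
    proof -
      have "(\<Sum>j\<in>N i. A i j * x $ j) = (\<Sum>j\<in>Pc i \<union> Nc i. A i j * x $ j)"
        by (rule sum.mono_neutral_cong_right) (auto simp: Pc_def Nc_def N_def xC)
      also have "\<dots> = (\<Sum>j\<in>Pc i. A i j * x $ j) + (\<Sum>j\<in>Nc i. A i j * x $ j)"
        by (rule sum.union_disjoint) (auto simp: Pc_def Nc_def)
      finally show ?thesis .
    qed
    have p: "(\<Sum>j\<in>Pc i. A i j * x $ j) = (if Pc i = {} then 0 else 1)"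
    proof -
      have "(\<Sum>j\<in>Pc i. A i j * x $ j) = (\<Sum>j\<in>Pc i. 1 / real (card (Pc i)))"
        by (rule sum.cong) (auto simp: Pc_def A_def wt_def x_def True)
      also have "\<dots> = (if Pc i = {} then 0 else 1)" by simp
      finally show ?thesis .
    qed
    have n: "(\<Sum>j\<in>Nc i. A i j * x $ j) = (if Nc i = {} then 0 else -1)"
    proof -
      have "(\<Sum>j\<in>Nc i. A i j * x $ j) = (\<Sum>j\<in>Nc i. - (1 / real (card (Nc i))))"
        by (rule sum.cong) (auto simp: Nc_def A_def wt_def x_def True)
      also have "\<dots> = (if Nc i = {} then 0 else -1)" by simp
      finally show ?thesis .
    qed
    have "(Pc i = {}) = (Nc i = {})"
      using sgn[OF True] unfolding Pc_def Nc_def by blast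
    then show ?thesis unfolding d_def using True split p n by simp
  qed
  have Mx: "M *v x = (- K0) *\<^sub>R x"
  proof -
    have "(M *v x) $ i = - K0 * x $ i" for i
    proof -
      have "(M *v x) $ i = (\<Sum>j\<in>UNIV. M $ i $ j * x $ j)" by (simp add: matrix_vector_mult_def)
      also have "\<dots> = M $ i $ i * x $ i + (\<Sum>j\<in>UNIV - {i}. M $ i $ j * x $ j)"
        by (simp add: sum.remove)
      also have "(\<Sum>j\<in>UNIV - {i}. M $ i $ j * x $ j) = (\<Sum>j\<in>N i. A i j * x $ j)"
      proof -
        have "(\<Sum>j\<in>UNIV - {i}. M $ i $ j * x $ j) = (\<Sum>j\<in>UNIV - {i}. A i j * x $ j)"
          by (rule sum.cong) (auto simp: M_def)
        also have "\<dots> = (\<Sum>j\<in>N i. A i j * x $ j)"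
          by (rule sum.mono_neutral_cong_right) (auto simp: N_def A_zero iN simple_irrefl[OF sg])
        finally show ?thesis .
      qed
      finally show ?thesis using row[of i] by (simp add: M_def algebra_simps)
    qed
    thus ?thesis by (simp add: vec_eq_iff)
  qed
  have Msym: "transpose M = M"
    unfolding transpose_def M_def by (simp add: vec_eq_iff A_sym)
  have Mq: "M \<in> qualclass E"
    unfolding qualclass_def
  proof (intro CollectI conjI allI impI)
    show "transpose M = M" by (rule Msym)
  next
    fix i j :: 'n assume "i \<noteq> j"
    show "E i j \<Longrightarrow> 0 < M $ i $ j" using \<open>i \<noteq> j\<close> A_pos by (simp add: M_def)
    show "\<not> E i j \<Longrightarrow> M $ i $ j = 0" using \<open>i \<noteq> j\<close> A_zero by (simp add: M_def)
  next
    fix i :: 'n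
    have sN: "(\<Sum>j\<in>{j. E i j}. M $ i $ j) = (\<Sum>j\<in>N i. A i j)"
      by (rule sum.cong) (auto simp: N_def M_def simple_irrefl[OF sg])
    have le: "\<bar>d i\<bar> + (\<Sum>j\<in>N i. A i j) \<le> (\<Sum>i\<in>UNIV. \<bar>d i\<bar> + (\<Sum>j\<in>N i. A i j))"
      by (rule member_le_sum) (auto intro!: add_nonneg_nonneg sum_nonneg A_nn)
    show "\<exists>a<0. M $ i $ i = - (\<Sum>j\<in>{j. E i j}. M $ i $ j) + a"
      by (rule exI[of _ "d i - K0 + (\<Sum>j\<in>N i. A i j)"]) (use le sN in \<open>auto simp: M_def K0_def\<close>)
  qed
  have xne: "x \<noteq> 0"
  proof -
    obtain i where "i \<notin> C" using nC by blast
    hence "x $ i \<noteq> 0" using x_def by auto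
    thus ?thesis by auto
  qed
  have pw: "matpow M t *v x = ((- K0) ^ t) *\<^sub>R x" for t
  proof (induction t)
    case 0 then show ?case by simp
  next
    case (Suc t)
    have "matpow M (Suc t) *v x = M *v (matpow M t *v x)" by (simp add: matrix_vector_mul_assoc)
    also have "\<dots> = ((- K0) ^ t) *\<^sub>R (M *v x)" using Suc by (simp add: matrix_vector_mult_scaleR)
    finally show ?case using Mx by simp
  qed
  have inn: "inner x (matpow M t *v y) = inner (matpow M t *v x) y" for t y
    using inner_sym_mat[OF matpow_transpose[OF Msym]] by blast
  show ?thesis using Mq xne xC inn pw by blast
qed



lemma decomp_lists:
  assumes "path_decomposition E m v V"
  shows "\<exists>P. \<forall>r<m. is_gpath E (P r) \<and> set (P r) = V r \<and> hd (P r) = v r"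
proof -
  have "\<forall>r<m. \<exists>xs. is_gpath E xs \<and> set xs = V r \<and> hd xs = v r"
    using assms unfolding path_decomposition_def induced_path_from_def by blast
  then show ?thesis by metis
qed

theorem theorem2:
  fixes E :: "'n::finite \<Rightarrow> 'n \<Rightarrow> bool" and m :: nat and v :: "nat \<Rightarrow> 'n"
  assumes "is_tree E"
    and "m \<ge> 2"
    and "inj_on v {..<m}"
  shows "(SSC E m v \<longleftrightarrow> (\<exists>V. path_decomposition E m v V)) \<and>
         (\<forall>V. path_decomposition E m v V \<longrightarrow>
            (\<forall>r<m. \<forall>r'<m. r \<noteq> r' \<longrightarrow> card {(x, y). x \<in> V r \<and> y \<in> V r' \<and> E x y} \<le> 1))"
proof -
  have sg: "simple_graph E" and ac: "graph_acyclic E" using assms(1) is_tree_def by auto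
  have part3: "\<forall>V. path_decomposition E m v V \<longrightarrow>
            (\<forall>r<m. \<forall>r'<m. r \<noteq> r' \<longrightarrow> card {(x, y). x \<in> V r \<and> y \<in> V r' \<and> E x y} \<le> 1)"
  proof (intro allI impI)
    fix V r r' assume pd: "path_decomposition E m v V" and rr: "r < m" "r' < m" "r \<noteq> r'"
    obtain P where P: "\<forall>r<m. is_gpath E (P r) \<and> set (P r) = V r \<and> hd (P r) = v r"
      using decomp_lists[OF pd] by blast
    have dj: "set (P r) \<inter> set (P r') = {}" using pd P rr unfolding path_decomposition_def by auto
    let ?T = "{(x, y). x \<in> V r \<and> y \<in> V r' \<and> E x y}"
    have "\<forall>a1\<in>?T. \<forall>a2\<in>?T. a1 = a2"
    proof (intro ballI)
      fix a1 a2 assume a: "a1 \<in> ?T" "a2 \<in> ?T"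
      obtain x1 y1 x2 y2 where xy: "a1 = (x1, y1)" "a2 = (x2, y2)" by fastforce
      show "a1 = a2"
      proof (rule ccontr)
        assume "a1 \<noteq> a2"
        have m: "x1 \<in> set (P r)" "x2 \<in> set (P r)" "y1 \<in> set (P r')" "y2 \<in> set (P r')"
          "E x1 y1" "E x2 y2" using a xy P rr by auto
        have g: "is_gpath E (P r)" "is_gpath E (P r')" using P rr by auto
        from \<open>a1 \<noteq> a2\<close> xy have "(x1, y1) \<noteq> (x2, y2)" by simp
        then show False
          using two_edges[OF sg ac g dj m(1,2) m(3,4) m(5,6)] by blast
      qed
    qed
    moreover have fT: "finite ?T" by simp
    ultimately show "card ?T \<le> 1" using card_le_Suc0_iff_eq[OF fT] by simp
  qed
  have fwd: "\<exists>V. path_decomposition E m v V" if ssc: "SSC E m v"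
  proof -
    obtain S P where gd: "good E m v S P"
      and cl: "\<forall>c w. c \<in> S \<and> E c w \<and> w \<notin> S \<longrightarrow> (\<exists>u. E c u \<and> u \<noteq> w \<and> u \<notin> S)"
      using closure_exists[OF assms(3), of E] by blast
    have Pg: "\<And>r. r < m \<Longrightarrow> is_gpath E (P r) \<and> hd (P r) = v r"
      and Pu: "(\<Union>r<m. set (P r)) = S"
      and Pd: "\<And>r r'. r < m \<Longrightarrow> r' < m \<Longrightarrow> r \<noteq> r' \<Longrightarrow> set (P r) \<inter> set (P r') = {}"
      using gd unfolding good_def by auto
    have vS: "v r \<in> S" if "r < m" for r
    proof -
      have "v r \<in> set (P r)" using Pg[OF that] by (metis hd_in_set is_gpath_def)
      thus ?thesis using Pu that by blast
    qed
    show ?thesis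
    proof (cases "S = UNIV")
      case True
      have "path_decomposition E m v (\<lambda>r. set (P r))"
        unfolding path_decomposition_def induced_path_from_def
      proof (intro conjI allI impI)
        show "(\<Union>r<m. set (P r)) = UNIV" using Pu True by simp
      next
        fix r r' assume "r < m" "r' < m" "r \<noteq> r'"
        then show "set (P r) \<inter> set (P r') = {}" by (rule Pd)
      next
        fix r assume r: "r < m"
        show "v r \<in> set (P r)" using Pg[OF r] by (metis hd_in_set is_gpath_def)
        show "\<exists>xs. is_gpath E xs \<and> set xs = set (P r) \<and> hd xs = v r \<and>
           (\<forall>i j. i < length xs \<and> j < length xs \<and> E (xs ! i) (xs ! j) \<longrightarrow> i = Suc j \<or> j = Suc i)"
        proof -
          have g: "is_gpath E (P r)" "hd (P r) = v r" using Pg[OF r] by auto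
          have ind: "\<forall>i j. i < length (P r) \<and> j < length (P r) \<and> E (P r ! i) (P r ! j) \<longrightarrow> i = Suc j \<or> j = Suc i"
            using gpath_induced[OF sg ac g(1)] by blast
          show ?thesis by (rule exI[of _ "P r"], intro conjI, rule g(1), rule refl, rule g(2), rule ind)
        qed
      qed
      then show ?thesis by blast
    next
      case False
      from sign_exists[OF sg ac, where C=S and U=UNIV] obtain s where s: "\<forall>c\<in>S \<inter> UNIV. (\<exists>w1 w2. w1 \<noteq> w2 \<and> w1 \<in> UNIV - S \<and> w2 \<in> UNIV - S \<and> E c w1 \<and> E c w2)
            \<longrightarrow> (\<exists>w\<in>UNIV - S. E c w \<and> s w) \<and> (\<exists>w\<in>UNIV - S. E c w \<and> \<not> s w)"
        by (elim exE) assumption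
      have sgn: "(\<exists>w. w \<notin> S \<and> E c w \<and> s w) \<and> (\<exists>w. w \<notin> S \<and> E c w \<and> \<not> s w)"
        if cS: "c \<in> S" and ex: "\<exists>w. w \<notin> S \<and> E c w" for c
      proof -
        obtain w where w: "w \<notin> S" "E c w" using ex by blast
        obtain u where u: "E c u" "u \<noteq> w" "u \<notin> S" using cl cS w by blast
        have "\<exists>w1 w2. w1 \<noteq> w2 \<and> w1 \<in> UNIV - S \<and> w2 \<in> UNIV - S \<and> E c w1 \<and> E c w2"
          using w u by blast
        thus ?thesis using s cS by blast
      qed
      obtain M x K where M: "M \<in> qualclass E" "x \<noteq> 0" "\<forall>i\<in>S. x $ i = 0"
        "\<forall>t y. inner x (matpow M t *v y) = inner (matpow M t *v x) y"
        "\<forall>t. matpow M t *v x = (K ^ t) *\<^sub>R x"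
        using bad_matrix[OF sg False sgn] by blast
      have "dim (ctrb_columns M m v) < CARD('n)"
      proof (rule not_ssc_if[OF M(2)])
        fix r t assume r: "r < m"
        have "inner x (matpow M t *v axis (v r) 1) = inner ((K ^ t) *\<^sub>R x) (axis (v r) 1)"
          using M(4,5) by simp
        also have "\<dots> = K ^ t * x $ v r" by (simp add: inner_axis)
        also have "\<dots> = 0" using M(3) vS[OF r] by simp
        finally show "inner x (matpow M t *v axis (v r) 1) = 0" .
      qed
      with ssc M(1) show ?thesis unfolding SSC_def by auto
    qed
  qed
  have bwd: "SSC E m v" if pdV: "path_decomposition E m v V" for V
  proof -
    obtain P where P: "\<forall>r<m. is_gpath E (P r) \<and> set (P r) = V r \<and> hd (P r) = v r"
      using decomp_lists[OF pdV] by blast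
    have cov: "(\<Union>r<m. set (P r)) = UNIV" using pdV P unfolding path_decomposition_def by auto
    have dj: "\<And>r r'. r < m \<Longrightarrow> r' < m \<Longrightarrow> r \<noteq> r' \<Longrightarrow> set (P r) \<inter> set (P r') = {}"
      using pdV P unfolding path_decomposition_def by auto
    show ?thesis unfolding SSC_def
    proof
      fix M assume Mq: "M \<in> qualclass E"
      have Msym: "transpose M = M" using Mq qualclass_def by blast
      have Mpos: "M $ i $ j > 0" if "E i j" for i j
        using Mq that simple_irrefl[OF sg, of i] unfolding qualclass_def by (metis (mono_tags, lifting) mem_Collect_eq)
      have Mz: "M $ i $ j = 0" if "i \<noteq> j" "\<not> E i j" for i j
        using Mq that unfolding qualclass_def by blast
      show "dim (ctrb_columns M m v) = CARD('n)"
      proof (rule ssc_if)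
        fix x :: "real^'n" assume orth: "\<And>r t. r < m \<Longrightarrow> inner x (matpow M t *v axis (v r) 1) = 0"
        define Z where "Z = {i. \<forall>t. (matpow M t *v x) $ i = 0}"
        have Zv: "v r \<in> Z" if "r < m" for r
        proof -
          have "(matpow M t *v x) $ v r = 0" for t
          proof -
            have "(matpow M t *v x) $ v r = inner (matpow M t *v x) (axis (v r) 1)" by (simp add: inner_axis)
            also have "\<dots> = inner x (matpow M t *v axis (v r) 1)"
              using inner_sym_mat[OF matpow_transpose[OF Msym]] by metis
            finally show ?thesis using orth[OF that] by simp
          qed
          thus ?thesis unfolding Z_def by blast
        qed
        have cl: "\<exists>u. E c u \<and> u \<noteq> w \<and> u \<notin> Z" if c: "c \<in> Z" "E c w" "w \<notin> Z" for c w
        proof (rule ccontr)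
          assume nu: "\<not> (\<exists>u. E c u \<and> u \<noteq> w \<and> u \<notin> Z)"
          have "(matpow M t *v x) $ w = 0" for t
          proof -
            let ?y = "matpow M t *v x"
            have f0: "M $ c $ j * ?y $ j = 0" if "j \<noteq> w" for j
            proof (cases "E c j")
              case True
              hence "j \<in> Z" using nu that by blast
              then show ?thesis unfolding Z_def by simp
            next
              case False
              show ?thesis
              proof (cases "j = c")
                case True
                then show ?thesis using c(1) unfolding Z_def by simp
              next
                case False
                then show ?thesis using Mz \<open>\<not> E c j\<close> by (metis mult_zero_left)
              qed
            qed
            have "0 = (matpow M (Suc t) *v x) $ c" using c(1) unfolding Z_def by (metis (mono_tags, lifting) matpow.simps(2) mem_Collect_eq)
            also have "\<dots> = (M *v ?y) $ c" by (simp add: matrix_vector_mul_assoc)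
            also have "\<dots> = (\<Sum>j\<in>UNIV. M $ c $ j * ?y $ j)" by (simp add: matrix_vector_mult_def)
            also have "\<dots> = M $ c $ w * ?y $ w + (\<Sum>j\<in>UNIV - {w}. M $ c $ j * ?y $ j)"
              by (simp add: sum.remove)
            also have "(\<Sum>j\<in>UNIV - {w}. M $ c $ j * ?y $ j) = 0"
              by (rule sum.neutral) (use f0 in auto)
            finally have "M $ c $ w * ?y $ w = 0" by simp
            thus ?thesis using Mpos[OF c(2)] by simp
          qed
          hence "w \<in> Z" unfolding Z_def by blast
          thus False using c(3) by blast
        qed
        have "Z = UNIV"
          by (rule decomp_forces[OF sg ac _ cov dj Zv cl]) (use P in auto)
        have "x $ i = 0" for i
        proof -
          have "i \<in> Z" using \<open>Z = UNIV\<close> by simp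
          hence "(matpow M 0 *v x) $ i = 0" unfolding Z_def by blast
          thus ?thesis by simp
        qed
        thus "x = 0" by (simp add: vec_eq_iff)
      qed
    qed
  qed
  show ?thesis using part3 fwd bwd by blast
qed


end
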